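(* Let $g:[0,\infty)\to[0,\infty)$ be a function with $g(x)\to\infty$ as $x\to\infty$, and let $h,h':[0,\infty)\to[0,\infty)$ be slowly varying functions. Then there exists $f:[0,\infty)\to[0,\infty)$ such that $\lim_{x\to\infty}f(x)=\infty$, $\lim_{x\to\infty}f(x)/x=0$, $\lim_{x\to\infty}f(x)g(x)/x=\infty$, and $$\lim_{x\to\infty}\frac{h(x)}{h(f(x))}=1,\qquad \lim_{x\to\infty}\frac{h'(x)}{h'(f(x))}=1.$$
   Context: A function $h$ is slowly varying if $h(\lambda x)/h(x)\to1$ as $x\to\infty$ for every $\lambda>0$. *)

theory Defs
  imports "HOL-Analysis.Analysis"
begin

definition slowly_varying :: "(real \<Rightarrow> real) \<Rightarrow> bool" where
  "slowly_varying h \<longleftrightarrow> (\<forall>c>0. ((\<lambda>x. h (c * x) / h x) \<longlongrightarrow> 1) at_top)"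

end

theory Submission
  imports Defs
begin

theorem lemma1:
  fixes g h h' :: "real \<Rightarrow> real"
  assumes g_nonneg: "\<forall>x\<ge>0. g x \<ge> 0"
    and g_lim: "filterlim g at_top at_top"
    and h_nonneg: "\<forall>x\<ge>0. h x \<ge> 0"
    and h'_nonneg: "\<forall>x\<ge>0. h' x \<ge> 0"
    and h_sv: "slowly_varying h"
    and h'_sv: "slowly_varying h'"
  shows "\<exists>f :: real \<Rightarrow> real. (\<forall>x\<ge>0. f x \<ge> 0)
           \<and> filterlim f at_top at_top
           \<and> ((\<lambda>x. f x / x) \<longlongrightarrow> 0) at_top
           \<and> filterlim (\<lambda>x. f x * g x / x) at_top at_top
           \<and> ((\<lambda>x. h x / h (f x)) \<longlongrightarrow> 1) at_top
           \<and> ((\<lambda>x. h' x / h' (f x)) \<longlongrightarrow> 1) at_top"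
proof -
  define Q where "Q = (\<lambda>(n::nat) y. \<bar>h y / h (y / real n) - 1\<bar> < 1 / real n
      \<and> \<bar>h' y / h' (y / real n) - 1\<bar> < 1 / real n \<and> g y \<ge> real n ^ 2 \<and> y \<ge> real n ^ 2)"
  have ex: "\<exists>X. \<forall>y\<ge>X. Q n y" if n1: "n \<ge> 1" for n
  proof -
    have np: "(1 / real n) > 0" using n1 by simp
    have t1: "((\<lambda>y. h ((1 / real n) * y) / h y) \<longlongrightarrow> 1) at_top"
      using h_sv np unfolding slowly_varying_def by blast
    have t2: "((\<lambda>y. h' ((1 / real n) * y) / h' y) \<longlongrightarrow> 1) at_top"
      using h'_sv np unfolding slowly_varying_def by blast
    have i1: "((\<lambda>y. h y / h (y / real n)) \<longlongrightarrow> 1) at_top"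
      using tendsto_inverse[OF t1] by (simp add: field_simps)
    have i2: "((\<lambda>y. h' y / h' (y / real n)) \<longlongrightarrow> 1) at_top"
      using tendsto_inverse[OF t2] by (simp add: field_simps)
    have e1: "eventually (\<lambda>y. \<bar>h y / h (y / real n) - 1\<bar> < 1 / real n) at_top"
      using tendstoD[OF i1 np] by (simp add: dist_real_def)
    have e2: "eventually (\<lambda>y. \<bar>h' y / h' (y / real n) - 1\<bar> < 1 / real n) at_top"
      using tendstoD[OF i2 np] by (simp add: dist_real_def)
    have e3: "eventually (\<lambda>y. g y \<ge> real n ^ 2) at_top"
      using g_lim filterlim_at_top by blast
    have e4: "eventually (\<lambda>y. y \<ge> real n ^ 2) at_top"
      by (rule eventually_ge_at_top)
    have "eventually (Q n) at_top"
      using e1 e2 e3 e4 unfolding Q_def by eventually_elim auto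
    then show ?thesis by (simp add: eventually_at_top_linorder)
  qed
  define X where "X = (\<lambda>n. SOME X. \<forall>y\<ge>X. Q n y)"
  have XQ: "Q n y" if "n \<ge> 1" "y \<ge> X n" for n y
  proof -
    have "\<forall>y\<ge>X n. Q n y" unfolding X_def using ex[OF that(1)] by (rule someI_ex)
    then show ?thesis using that(2) by blast
  qed
  define xx where "xx = (\<lambda>n. max (X n) (real n))"
  define S where "S = (\<lambda>x. {n. n \<ge> 1 \<and> xx n \<le> x})"
  define k where "k = (\<lambda>x. Max (insert 1 (S x)))"
  have finS: "finite (S x)" for x
  proof -
    have "S x \<subseteq> {..nat \<lceil>x\<rceil>}"
      unfolding S_def xx_def by (auto simp: le_nat_iff intro!: le_ceiling_iff[THEN iffD2])
    then show ?thesis by (rule finite_subset) auto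
  qed
  have k1: "k x \<ge> 1" for x unfolding k_def using finS by simp
  have kge: "k x \<ge> N" if "N \<ge> 1" "x \<ge> xx N" for x N
    unfolding k_def using finS that by (intro Max_ge) (auto simp: S_def)
  have kQ: "Q (k x) x" if "x \<ge> xx 1" for x
  proof -
    have "1 \<in> S x" using that by (simp add: S_def)
    then have "insert 1 (S x) = S x" by auto
    then have "k x \<in> S x" unfolding k_def using Max_in[OF finS[of x]] \<open>1 \<in> S x\<close> by auto
    then show ?thesis using XQ unfolding S_def xx_def by auto
  qed
  have klim: "filterlim (\<lambda>x. real (k x)) at_top at_top"
    unfolding filterlim_at_top
  proof
    fix Z :: real
    define N where "N = Suc (nat \<lceil>Z\<rceil>)"
    have "eventually (\<lambda>x. x \<ge> xx N) at_top" by (rule eventually_ge_at_top)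
    then show "eventually (\<lambda>x. real (k x) \<ge> Z) at_top"
    proof eventually_elim
      case (elim x)
      then have "k x \<ge> N" using kge[of N x] by (simp add: N_def)
      moreover have "Z \<le> real N" unfolding N_def by linarith
      ultimately show ?case by linarith
    qed
  qed
  have inv0: "((\<lambda>x. 1 / real (k x)) \<longlongrightarrow> 0) at_top"
    using tendsto_inverse_0_at_top[OF klim] by (simp add: divide_inverse)
  have evQ: "eventually (\<lambda>x. Q (k x) x) at_top"
    using eventually_ge_at_top[of "xx 1"] by eventually_elim (rule kQ)
  define f where "f = (\<lambda>x. x / real (k x))"
  have P1: "\<forall>x\<ge>0. f x \<ge> 0" unfolding f_def by simp
  have P2: "filterlim f at_top at_top"
  proof (rule filterlim_at_top_mono[OF klim])
    show "eventually (\<lambda>x. real (k x) \<le> f x) at_top"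
      using evQ
    proof eventually_elim
      case (elim x)
      then have a: "x \<ge> real (k x) ^ 2" unfolding Q_def by auto
      have b: "real (k x) \<ge> 1" using k1[of x] by simp
      show ?case unfolding f_def using a b by (simp add: field_simps power2_eq_square)
    qed
  qed
  have P3: "((\<lambda>x. f x / x) \<longlongrightarrow> 0) at_top"
  proof -
    have "eventually (\<lambda>x. 1 / real (k x) = f x / x) at_top"
      using eventually_gt_at_top[of 0] by eventually_elim (simp add: f_def)
    then show ?thesis using inv0 by (rule tendsto_cong[THEN iffD1])
  qed
  have P4: "filterlim (\<lambda>x. f x * g x / x) at_top at_top"
  proof (rule filterlim_at_top_mono[OF klim])
    show "eventually (\<lambda>x. real (k x) \<le> f x * g x / x) at_top"
      using evQ eventually_gt_at_top[of 0]
    proof eventually_elim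
      case (elim x)
      then have a: "g x \<ge> real (k x) ^ 2" unfolding Q_def by auto
      have b: "real (k x) \<ge> 1" using k1[of x] by simp
      have eq: "f x * g x / x = g x / real (k x)" unfolding f_def using elim by simp
      have "real (k x) \<le> g x / real (k x)" using a b by (simp add: field_simps power2_eq_square)
      then show ?case using eq by simp
    qed
  qed
  have P5: "((\<lambda>x. h x / h (f x)) \<longlongrightarrow> 1) at_top"
  proof -
    have "((\<lambda>x. h x / h (f x) - 1) \<longlongrightarrow> 0) at_top"
    proof (rule Lim_null_comparison[OF _ inv0])
      show "eventually (\<lambda>x. norm (h x / h (f x) - 1) \<le> 1 / real (k x)) at_top"
        using evQ by eventually_elim (auto simp: Q_def f_def)
    qed
    then show ?thesis by (simp add: LIM_zero_iff)
  qed
  have P6: "((\<lambda>x. h' x / h' (f x)) \<longlongrightarrow> 1) at_top"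
  proof -
    have "((\<lambda>x. h' x / h' (f x) - 1) \<longlongrightarrow> 0) at_top"
    proof (rule Lim_null_comparison[OF _ inv0])
      show "eventually (\<lambda>x. norm (h' x / h' (f x) - 1) \<le> 1 / real (k x)) at_top"
        using evQ by eventually_elim (auto simp: Q_def f_def)
    qed
    then show ?thesis by (simp add: LIM_zero_iff)
  qed
  show ?thesis using P1 P2 P3 P4 P5 P6 by blast
qed

end
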